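(* Let $F\in\mathcal S^\sharp$ and $C>0$. There is a constant $K>0$ (depending on $C$ and $F$) such that for all $t\in[-C,0)$ and all $x\in\mathbb R$, \[ \widetilde{F_t}(x)\le K\exp\!\Bigl(\tfrac{10}{|t|}\min(x,-2)^2\Bigr). \] In particular $|F_t(x+iy)|\le K\exp\!\bigl(\tfrac{10}{|t|}\min(x,-2)^2\bigr)$ for all $x,y\in\mathbb R$.
   Context: The extended Selberg class $\mathcal S^\sharp$ is the set of functions $F$, not identically zero, such that: (i) $F(s)=\sum_{n\ge1}a_n n^{-s}$, with the series converging absolutely for $\Re s>1$; (ii) $(s-1)^mF(s)$ extends to an entire function of finite order for some integer $m\ge0$; (iii) letting $m$ be the order of the pole of $F$ at $s=1$ ($m=0$ if there is no pole), there is a function $\gamma(s)=\alpha s^m(s-1)^mQ^s\prod_{i=1}^k\Gamma(\omega_i s+\mu_i)$ with $\alpha\in\mathbb C\setminus\{0\}$, $Q>0$, an integer $k\ge1$, $\omega_i>0$ and $\mu_i\in\mathbb C$ with $\Re\mu_i\ge0$, such that the (entire) function $\xi^F(s):=\gamma(s)F(s)$ satisfies $\xi^F(s)=\overline{\xi^F(1-\bar s)}$ for all $s$. For $t<0$: $F_t(s):=\sum_{n\ge1}\exp\!\left(-\frac{|t|}{4}\log^2 n\right)a_n n^{-s}$ and $\widetilde{F_t}(x):=\sum_{n\ge1}\exp\!\left(-\frac{|t|}{4}\log^2 n\right)|a_n| n^{-x}$ for $x\in\mathbb R$. *)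

theory Defs
  imports "HOL-Analysis.Analysis"
begin

definition entire_finite_order :: "(complex \<Rightarrow> complex) \<Rightarrow> bool" where
  "entire_finite_order G \<longleftrightarrow> G holomorphic_on UNIV \<and>
     (\<exists>\<rho> c. \<forall>z. norm (G z) \<le> c * exp (norm z powr \<rho>))"

definition gamma_factor ::
  "complex \<Rightarrow> nat \<Rightarrow> real \<Rightarrow> nat \<Rightarrow> (nat \<Rightarrow> real) \<Rightarrow> (nat \<Rightarrow> complex) \<Rightarrow> complex \<Rightarrow> complex" where
  "gamma_factor \<alpha> m Q k \<omega> \<mu> s =
     \<alpha> * s ^ m * (s - 1) ^ m * (complex_of_real Q powr s) *
     (\<Prod>i<k. Gamma (complex_of_real (\<omega> i) * s + \<mu> i))"

text \<open>The extended Selberg class: F (defined on C minus {1}) with Dirichlet coefficients a n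
  (n >= 1; the value a 0 is irrelevant).\<close>
definition ext_selberg :: "(nat \<Rightarrow> complex) \<Rightarrow> (complex \<Rightarrow> complex) \<Rightarrow> bool" where
  "ext_selberg a F \<longleftrightarrow>
     (\<forall>s. Re s > 1 \<longrightarrow>
        summable (\<lambda>n. norm (a (Suc n) / of_nat (Suc n) powr s)) \<and>
        F s = (\<Sum>n. a (Suc n) / of_nat (Suc n) powr s)) \<and>
     (\<exists>s. s \<noteq> 1 \<and> F s \<noteq> 0) \<and>
     (\<exists>m::nat. \<exists>G. entire_finite_order G \<and>
        (\<forall>s. s \<noteq> 1 \<longrightarrow> G s = (s - 1) ^ m * F s) \<and>
        (m = 0 \<or> G 1 \<noteq> 0) \<and>
        (\<exists>\<alpha> Q k \<omega> \<mu> \<xi>. \<alpha> \<noteq> 0 \<and> Q > 0 \<and> k \<ge> 1 \<and>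
           (\<forall>i<k. \<omega> i > 0 \<and> Re (\<mu> i) \<ge> 0) \<and>
           \<xi> holomorphic_on UNIV \<and>
           (\<forall>s. Re s > 1 \<longrightarrow> \<xi> s = gamma_factor \<alpha> m Q k \<omega> \<mu> s * F s) \<and>
           (\<forall>s. \<xi> s = cnj (\<xi> (1 - cnj s)))))"

definition F_damped :: "(nat \<Rightarrow> complex) \<Rightarrow> real \<Rightarrow> complex \<Rightarrow> complex" where
  "F_damped a t s = (\<Sum>n. complex_of_real (exp (- (\<bar>t\<bar> / 4) * (ln (real (Suc n)))\<^sup>2))
                        * a (Suc n) / of_nat (Suc n) powr s)"

definition Ftilde_term :: "(nat \<Rightarrow> complex) \<Rightarrow> real \<Rightarrow> real \<Rightarrow> nat \<Rightarrow> real" where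
  "Ftilde_term a t x n = exp (- (\<bar>t\<bar> / 4) * (ln (real (Suc n)))\<^sup>2)
                        * norm (a (Suc n)) * real (Suc n) powr (- x)"

definition F_tilde :: "(nat \<Rightarrow> complex) \<Rightarrow> real \<Rightarrow> real \<Rightarrow> real" where
  "F_tilde a t x = (\<Sum>n. Ftilde_term a t x n)"

end

theory Submission
  imports Defs
begin

lemma key_ineq:
  fixes T L x :: real
  assumes T: "T > 0" and L: "L \<ge> 0"
  shows "- (T/4) * L\<^sup>2 + (2 - x) * L \<le> 10 / T * (min x (-2))\<^sup>2"
proof (cases "2 - x \<le> 0")
  case True
  have "- (T/4) * L\<^sup>2 \<le> 0" using T by simp
  moreover have "(2 - x) * L \<le> 0" using True L by (simp add: mult_nonpos_nonneg)
  moreover have "0 \<le> 10 / T * (min x (-2))\<^sup>2" using T by simp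
  ultimately show ?thesis by linarith
next
  case False
  define u where "u = 2 - x"
  have u: "u > 0" using False u_def by simp
  have sq: "0 \<le> (T*L/2 - u)\<^sup>2" by simp
  have "T * (- (T/4) * L\<^sup>2 + u * L) \<le> u\<^sup>2"
    using sq by (simp add: power2_eq_square algebra_simps)
  hence h1: "- (T/4) * L\<^sup>2 + u * L \<le> u\<^sup>2 / T" using T
    by (simp add: pos_le_divide_eq mult.commute)
  have h2: "u\<^sup>2 \<le> 10 * (min x (-2))\<^sup>2"
  proof (cases "x \<le> -2")
    case True
    hence "min x (-2) = x" by simp
    moreover have "u\<^sup>2 \<le> (-2*x)\<^sup>2" using True u_def u
      by (intro power_mono) auto
    moreover have "(-2*x)\<^sup>2 = 4 * x\<^sup>2" by (simp add: power2_eq_square)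
    moreover have "0 \<le> x\<^sup>2" by simp
    ultimately show ?thesis by linarith
  next
    case False
    hence "min x (-2) = -2" by simp
    moreover have "u\<^sup>2 \<le> 4\<^sup>2" using False u_def u
      by (intro power_mono) auto
    ultimately show ?thesis by simp
  qed
  have "u\<^sup>2 / T \<le> 10 / T * (min x (-2))\<^sup>2" using h2 T
    by (simp add: divide_right_mono)
  thus ?thesis using h1 u_def by simp
qed

lemma term_bound:
  fixes T x :: real and n :: nat and c :: complex
  assumes T: "T > 0"
  shows "exp (- (T/4) * (ln (real (Suc n)))\<^sup>2) * norm c * real (Suc n) powr (- x)
     \<le> norm (c / of_nat (Suc n) powr (2::complex)) * exp (10 / T * (min x (-2))\<^sup>2)"
proof -
  define L where "L = ln (real (Suc n))"
  have L0: "L \<ge> 0" unfolding L_def by simp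
  have nrm: "norm (c / of_nat (Suc n) powr (2::complex)) = norm c * exp (- 2 * L)"
  proof -
    have "norm (of_nat (Suc n) powr (2::complex)) = exp (2 * L)"
      using norm_powr_real[of "of_nat (Suc n)" 2] unfolding L_def by simp
    hence "norm (c / of_nat (Suc n) powr (2::complex)) = norm c / exp (2 * L)"
      by (simp only: norm_divide)
    thus ?thesis by (simp add: exp_minus divide_inverse)
  qed
  have p: "real (Suc n) powr (- x) = exp (- x * L)"
    unfolding L_def powr_def by simp
  have "exp (- (T/4) * L\<^sup>2) * norm c * exp (- x * L)
        = norm c * exp (- 2 * L) * exp (- (T/4) * L\<^sup>2 + (2 - x) * L)"
    by (simp add: exp_add[symmetric] algebra_simps)
  also have "\<dots> \<le> norm c * exp (- 2 * L) * exp (10 / T * (min x (-2))\<^sup>2)"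
    using key_ineq[OF T L0, of x] by (intro mult_left_mono) auto
  finally show ?thesis using nrm p L_def by simp
qed

theorem mainTheorem11:
  fixes a :: "nat \<Rightarrow> complex" and F :: "complex \<Rightarrow> complex" and C :: real
  assumes "ext_selberg a F" and "C > 0"
  shows "\<exists>K>0. \<forall>t. -C \<le> t \<and> t < 0 \<longrightarrow>
           (\<forall>x::real. summable (Ftilde_term a t x) \<and>
              F_tilde a t x \<le> K * exp (10 / \<bar>t\<bar> * (min x (-2))\<^sup>2)) \<and>
           (\<forall>x y::real. norm (F_damped a t (Complex x y)) \<le> K * exp (10 / \<bar>t\<bar> * (min x (-2))\<^sup>2))"
proof -
  define b where "b n = norm (a (Suc n) / of_nat (Suc n) powr (2::complex))" for n
  have r2: "Re (2::complex) > 1" by simp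
  have bs: "summable b" using assms(1) r2 unfolding ext_selberg_def b_def by blast
  define S where "S = suminf b"
  have S0: "S \<ge> 0" unfolding S_def using bs by (simp add: suminf_nonneg b_def)
  have "\<forall>t. -C \<le> t \<and> t < 0 \<longrightarrow>
           (\<forall>x::real. summable (Ftilde_term a t x) \<and>
              F_tilde a t x \<le> (S + 1) * exp (10 / \<bar>t\<bar> * (min x (-2))\<^sup>2)) \<and>
           (\<forall>x y::real. norm (F_damped a t (Complex x y)) \<le> (S + 1) * exp (10 / \<bar>t\<bar> * (min x (-2))\<^sup>2))"
  proof (intro allI impI)
    fix t :: real assume t: "-C \<le> t \<and> t < 0"
    define T where "T = \<bar>t\<bar>"
    have T: "T > 0" using t T_def by simp
    have main: "summable (Ftilde_term a t x) \<and>
              F_tilde a t x \<le> (S + 1) * exp (10 / \<bar>t\<bar> * (min x (-2))\<^sup>2)" for x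
    proof -
      define E where "E = exp (10 / T * (min x (-2))\<^sup>2)"
      have le: "Ftilde_term a t x n \<le> b n * E" for n
        unfolding Ftilde_term_def b_def E_def T_def using term_bound[OF T, of n "a (Suc n)" x] T_def by simp
      have nn: "0 \<le> Ftilde_term a t x n" for n unfolding Ftilde_term_def by simp
      have bE: "summable (\<lambda>n. b n * E)" using bs by (rule summable_mult2)
      have sm: "summable (Ftilde_term a t x)"
        by (rule summable_comparison_test'[OF bE]) (use le nn in auto)
      have "F_tilde a t x \<le> (\<Sum>n. b n * E)" unfolding F_tilde_def
        by (rule suminf_le[OF le sm bE])
      also have "\<dots> = S * E" unfolding S_def using bs by (simp add: suminf_mult2)
      also have "\<dots> \<le> (S + 1) * E" unfolding E_def by simp
      finally show ?thesis using sm E_def T_def by simp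
    qed
    have part2: "norm (F_damped a t (Complex x y)) \<le> (S + 1) * exp (10 / \<bar>t\<bar> * (min x (-2))\<^sup>2)" for x y
    proof -
    define f where "f n = complex_of_real (exp (- (\<bar>t\<bar> / 4) * (ln (real (Suc n)))\<^sup>2))
                        * a (Suc n) / of_nat (Suc n) powr (Complex x y)" for n
    have nf: "norm (f n) = Ftilde_term a t x n" for n
    proof -
      have "norm (of_nat (Suc n) powr (Complex x y)) = real (Suc n) powr x"
        using norm_powr_real_powr[of "of_nat (Suc n)" "Complex x y"] by simp
      hence "norm (f n) = \<bar>exp (- (\<bar>t\<bar> / 4) * (ln (real (Suc n)))\<^sup>2)\<bar> * norm (a (Suc n)) / real (Suc n) powr x"
        unfolding f_def by (simp only: norm_divide norm_mult norm_of_real)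
      also have "\<dots> = Ftilde_term a t x n" unfolding Ftilde_term_def powr_minus_divide
        by simp
      finally show ?thesis .
    qed
    have "norm (F_damped a t (Complex x y)) = norm (suminf f)"
      unfolding F_damped_def f_def by simp
    also have "\<dots> \<le> (\<Sum>n. norm (f n))"
      by (rule summable_norm) (simp add: nf main)
    also have "\<dots> = F_tilde a t x" unfolding F_tilde_def nf by simp
    also have "\<dots> \<le> (S + 1) * exp (10 / \<bar>t\<bar> * (min x (-2))\<^sup>2)" using main by blast
    finally show ?thesis .
    qed
    show "(\<forall>x::real. summable (Ftilde_term a t x) \<and>
              F_tilde a t x \<le> (S + 1) * exp (10 / \<bar>t\<bar> * (min x (-2))\<^sup>2)) \<and>
           (\<forall>x y::real. norm (F_damped a t (Complex x y)) \<le> (S + 1) * exp (10 / \<bar>t\<bar> * (min x (-2))\<^sup>2))"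
      using main part2 by blast
  qed
  moreover have "S + 1 > 0" using S0 by simp
  ultimately show ?thesis by blast
qed

end
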